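(* Let $X$ be a random variable taking values in a set $\mathcal{X}$ and $Y \in [0,1]$ a target outcome. Let $\mathcal{F}$ be a class of functions $\mathcal{X} \to [0,1]$, $\alpha \ge 0$, and let $S_1, \dots, S_K$ be an $\alpha$-multicalibrated partition with respect to $\mathcal{F}$ and $Y$. Then for all $f \in \mathcal{F}$ and $k \in [K]$, $$\mathbb{E}_k\left[(Y - \mathbb{E}_k[Y])^2\right] \le \mathbb{E}_k\left[(Y - f(X))^2\right] + 2\alpha.$$
   Context: $\mathbb{E}_k$ denotes expectation conditional on $\{X \in S_k\}$ (assumed to have positive probability). A set $S \subseteq \mathcal{X}$ is $\alpha$-indistinguishable with respect to $\mathcal{F}$ and $Y$ if $|\mathrm{Cov}(f(X), Y \mid X \in S)| \le \alpha$ for all $f \in \mathcal{F}$. Sets $S_1, \dots, S_K$ form an $\alpha$-multicalibrated partition with respect to $\mathcal{F}$ and $Y$ if they partition $\mathcal{X}$ and each $S_k$ is $\alpha$-indistinguishable with respect to $\mathcal{F}$ and $Y$. *)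

theory Defs
  imports "HOL-Probability.Probability"
begin

text \<open>Conditional expectation of g given the event A (assumed of positive probability):
  E[g | A] = E[1_A g] / P(A).\<close>
definition cond_exp_ev :: "'a measure \<Rightarrow> 'a set \<Rightarrow> ('a \<Rightarrow> real) \<Rightarrow> real" where
  "cond_exp_ev M A g = (\<integral>\<omega>. indicator A \<omega> * g \<omega> \<partial>M) / measure M A"

definition cond_cov :: "'a measure \<Rightarrow> 'a set \<Rightarrow> ('a \<Rightarrow> real) \<Rightarrow> ('a \<Rightarrow> real) \<Rightarrow> real" where
  "cond_cov M A g h = cond_exp_ev M A (\<lambda>\<omega>. g \<omega> * h \<omega>) - cond_exp_ev M A g * cond_exp_ev M A h"

definition indistinguishable ::
  "'a measure \<Rightarrow> ('a \<Rightarrow> 'b) \<Rightarrow> ('a \<Rightarrow> real) \<Rightarrow> ('b \<Rightarrow> real) set \<Rightarrow> real \<Rightarrow> 'b set \<Rightarrow> bool" where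
  "indistinguishable M X Y F \<alpha> S \<longleftrightarrow>
     (\<forall>f\<in>F. \<bar>cond_cov M (X -` S \<inter> space M) (\<lambda>\<omega>. f (X \<omega>)) Y\<bar> \<le> \<alpha>)"

definition multicalibrated_partition ::
  "'a measure \<Rightarrow> ('a \<Rightarrow> 'b) \<Rightarrow> ('a \<Rightarrow> real) \<Rightarrow> ('b \<Rightarrow> real) set \<Rightarrow> real \<Rightarrow> 'b set
     \<Rightarrow> nat \<Rightarrow> (nat \<Rightarrow> 'b set) \<Rightarrow> bool" where
  "multicalibrated_partition M X Y F \<alpha> \<X> K S \<longleftrightarrow>
     (\<forall>k\<in>{1..K}. S k \<subseteq> \<X>) \<and> (\<Union>k\<in>{1..K}. S k) = \<X> \<and>
     (\<forall>j\<in>{1..K}. \<forall>k\<in>{1..K}. j \<noteq> k \<longrightarrow> S j \<inter> S k = {}) \<and>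
     (\<forall>k\<in>{1..K}. indistinguishable M X Y F \<alpha> (S k))"

end

theory Submission
  imports Defs
begin

locale ce_ctx =
  fixes M :: "'a measure" and A :: "'a set"
  assumes ps: "prob_space M" and A: "A \<in> sets M" and pos: "measure M A > 0"
begin

definition "I u \<longleftrightarrow> integrable M u"

lemma e_add: "integrable M u \<Longrightarrow> integrable M v \<Longrightarrow>
  cond_exp_ev M A (\<lambda>\<omega>. u \<omega> + v \<omega>) = cond_exp_ev M A u + cond_exp_ev M A v"
proof -
  assume u: "integrable M u" and v: "integrable M v"
  have "(\<integral>\<omega>. indicator A \<omega> * (u \<omega> + v \<omega>) \<partial>M) = (\<integral>\<omega>. indicator A \<omega> * u \<omega> + indicator A \<omega> * v \<omega> \<partial>M)"
    by (simp add: algebra_simps)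
  also have "\<dots> = (\<integral>\<omega>. indicator A \<omega> * u \<omega> \<partial>M) + (\<integral>\<omega>. indicator A \<omega> * v \<omega> \<partial>M)"
    using integrable_mult_indicator[OF A u] integrable_mult_indicator[OF A v]
    by (intro Bochner_Integration.integral_add) auto
  finally show ?thesis unfolding cond_exp_ev_def by (simp add: add_divide_distrib)
qed

lemma e_mult: "cond_exp_ev M A (\<lambda>\<omega>. c * u \<omega>) = c * cond_exp_ev M A u"
proof -
  have "(\<integral>\<omega>. indicator A \<omega> * (c * u \<omega>) \<partial>M) = (\<integral>\<omega>. c * (indicator A \<omega> * u \<omega>) \<partial>M)"
    by (simp add: algebra_simps)
  also have "\<dots> = c * (\<integral>\<omega>. indicator A \<omega> * u \<omega> \<partial>M)" by simp
  finally show ?thesis unfolding cond_exp_ev_def by simp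
qed

lemma e_const: "cond_exp_ev M A (\<lambda>\<omega>. c) = c"
proof -
  interpret prob_space M by (rule ps)
  have "(\<integral>\<omega>. indicator A \<omega> * c \<partial>M) = measure M A * c"
  proof -
    have "A \<inter> space M = A" using sets.sets_into_space[OF A] by blast
    then show ?thesis using A by simp
  qed
  then show ?thesis unfolding cond_exp_ev_def using pos
    by (metis less_irrefl nonzero_mult_div_cancel_left)
qed

lemma e_nonneg: "(\<And>\<omega>. \<omega> \<in> space M \<Longrightarrow> 0 \<le> u \<omega>) \<Longrightarrow> 0 \<le> cond_exp_ev M A u"
  unfolding cond_exp_ev_def using pos
  by (intro divide_nonneg_pos integral_nonneg) auto

end

lemma bnd_int:
  fixes B :: real
  assumes "prob_space M" "u \<in> borel_measurable M" "\<And>\<omega>. \<omega> \<in> space M \<Longrightarrow> \<bar>u \<omega>\<bar> \<le> B"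
  shows "integrable M u"
proof -
  interpret prob_space M by fact
  show ?thesis using assms(2,3) by (intro integrable_const_bound[where B=B]) auto
qed

theorem lemma1:
  fixes M :: "'a measure" and N :: "'b measure"
    and X :: "'a \<Rightarrow> 'b" and Y :: "'a \<Rightarrow> real"
    and F :: "('b \<Rightarrow> real) set" and \<alpha> :: real
    and K :: nat and S :: "nat \<Rightarrow> 'b set"
  assumes "prob_space M"
    and "X \<in> measurable M N"
    and "Y \<in> borel_measurable M"
    and "\<And>\<omega>. \<omega> \<in> space M \<Longrightarrow> 0 \<le> Y \<omega> \<and> Y \<omega> \<le> 1"
    and "\<And>f. f \<in> F \<Longrightarrow> f \<in> borel_measurable N"
    and "\<And>f x. f \<in> F \<Longrightarrow> x \<in> space N \<Longrightarrow> 0 \<le> f x \<and> f x \<le> 1"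
    and "\<alpha> \<ge> 0"
    and "\<And>k. k \<in> {1..K} \<Longrightarrow> S k \<in> sets N"
    and "\<And>k. k \<in> {1..K} \<Longrightarrow> measure M (X -` S k \<inter> space M) > 0"
    and "multicalibrated_partition M X Y F \<alpha> (space N) K S"
  shows "\<forall>f\<in>F. \<forall>k\<in>{1..K}.
    cond_exp_ev M (X -` S k \<inter> space M)
       (\<lambda>\<omega>. (Y \<omega> - cond_exp_ev M (X -` S k \<inter> space M) Y)\<^sup>2)
    \<le> cond_exp_ev M (X -` S k \<inter> space M) (\<lambda>\<omega>. (Y \<omega> - f (X \<omega>))\<^sup>2) + 2 * \<alpha>"
proof (intro ballI)
  fix f k assume f: "f \<in> F" and k: "k \<in> {1..K}"
  define A where "A = X -` S k \<inter> space M"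
  have Asets: "A \<in> sets M" unfolding A_def using assms(2) assms(8)[OF k] by (rule measurable_sets)
  have Apos: "measure M A > 0" unfolding A_def by (rule assms(9)[OF k])
  interpret ce_ctx M A by (rule ce_ctx.intro[OF assms(1) Asets Apos])
  define e where "e = cond_exp_ev M A"
  define g where "g = (\<lambda>\<omega>. f (X \<omega>))"
  have gm: "g \<in> borel_measurable M" unfolding g_def
    using measurable_comp[OF assms(2) assms(5)[OF f]] by (simp add: o_def)
  have gb: "\<And>\<omega>. \<omega> \<in> space M \<Longrightarrow> 0 \<le> g \<omega> \<and> g \<omega> \<le> 1"
    unfolding g_def using assms(6)[OF f] measurable_space[OF assms(2)] by blast
  have Yb: "\<And>\<omega>. \<omega> \<in> space M \<Longrightarrow> 0 \<le> Y \<omega> \<and> Y \<omega> \<le> 1" by (rule assms(4))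
  have iY: "integrable M Y"
    by (rule bnd_int[OF assms(1) assms(3), of 1]) (use Yb in force)
  have ig: "integrable M g"
    by (rule bnd_int[OF assms(1) gm, of 1]) (use gb in force)
  have iYY: "integrable M (\<lambda>\<omega>. Y \<omega> * Y \<omega>)"
  proof (rule bnd_int[OF assms(1), of _ 1])
    show "(\<lambda>\<omega>. Y \<omega> * Y \<omega>) \<in> borel_measurable M" using assms(3) by measurable
    fix \<omega> assume "\<omega> \<in> space M" then have "0 \<le> Y \<omega>" "Y \<omega> \<le> 1" using Yb by auto
    then show "\<bar>Y \<omega> * Y \<omega>\<bar> \<le> 1" by (simp add: mult_le_one)
  qed
  have igg: "integrable M (\<lambda>\<omega>. g \<omega> * g \<omega>)"
  proof (rule bnd_int[OF assms(1), of _ 1])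
    show "(\<lambda>\<omega>. g \<omega> * g \<omega>) \<in> borel_measurable M" using gm by measurable
    fix \<omega> assume "\<omega> \<in> space M" then have "0 \<le> g \<omega>" "g \<omega> \<le> 1" using gb by auto
    then show "\<bar>g \<omega> * g \<omega>\<bar> \<le> 1" by (simp add: mult_le_one)
  qed
  have igY: "integrable M (\<lambda>\<omega>. g \<omega> * Y \<omega>)"
  proof (rule bnd_int[OF assms(1), of _ 1])
    show "(\<lambda>\<omega>. g \<omega> * Y \<omega>) \<in> borel_measurable M" using gm assms(3) by measurable
    fix \<omega> assume "\<omega> \<in> space M" then have "0 \<le> g \<omega>" "g \<omega> \<le> 1" "0 \<le> Y \<omega>" "Y \<omega> \<le> 1" using gb Yb by auto
    then show "\<bar>g \<omega> * Y \<omega>\<bar> \<le> 1" by (simp add: mult_le_one)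
  qed
  have ic: "\<And>c. integrable M (\<lambda>\<omega>. c :: real)"
    using assms(1) by (simp add: prob_space.axioms finite_measure.integrable_const)
  have icY: "\<And>c. integrable M (\<lambda>\<omega>. c * Y \<omega>)" using iY by simp
  have icg: "\<And>c. integrable M (\<lambda>\<omega>. c * g \<omega>)" using ig by simp
  have icgY: "\<And>c. integrable M (\<lambda>\<omega>. c * (g \<omega> * Y \<omega>))" using igY by simp
  define \<mu> where "\<mu> = e Y"
  define \<nu> where "\<nu> = e g"
  have L1: "e (\<lambda>\<omega>. (Y \<omega> - \<mu>)\<^sup>2) = e (\<lambda>\<omega>. Y \<omega> * Y \<omega>) - \<mu>\<^sup>2"
  proof -
    have a0: "e (\<lambda>\<omega>. (Y \<omega> - \<mu>)\<^sup>2) = e (\<lambda>\<omega>. Y \<omega> * Y \<omega> + ((-2*\<mu>) * Y \<omega> + \<mu>\<^sup>2))"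
      by (rule arg_cong[where f=e]) (simp add: fun_eq_iff power2_eq_square algebra_simps)
    have a1: "e (\<lambda>\<omega>. Y \<omega> * Y \<omega> + ((-2*\<mu>) * Y \<omega> + \<mu>\<^sup>2)) = e (\<lambda>\<omega>. Y \<omega> * Y \<omega>) + e (\<lambda>\<omega>. (-2*\<mu>) * Y \<omega> + \<mu>\<^sup>2)"
      unfolding e_def by (rule e_add[OF iYY Bochner_Integration.integrable_add[OF icY ic]])
    have a2: "e (\<lambda>\<omega>. (-2*\<mu>) * Y \<omega> + \<mu>\<^sup>2) = (-2*\<mu>) * \<mu> + \<mu>\<^sup>2"
      unfolding e_def \<mu>_def by (simp only: e_add[OF icY ic] e_mult e_const)
    show ?thesis unfolding a0 a1 a2 by (simp add: power2_eq_square)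
  qed
  have L2: "e (\<lambda>\<omega>. (Y \<omega> - g \<omega>)\<^sup>2) = e (\<lambda>\<omega>. Y \<omega> * Y \<omega>) - 2 * e (\<lambda>\<omega>. g \<omega> * Y \<omega>) + e (\<lambda>\<omega>. g \<omega> * g \<omega>)"
  proof -
    have a0: "e (\<lambda>\<omega>. (Y \<omega> - g \<omega>)\<^sup>2) = e (\<lambda>\<omega>. Y \<omega> * Y \<omega> + ((-2) * (g \<omega> * Y \<omega>) + g \<omega> * g \<omega>))"
      by (rule arg_cong[where f=e]) (simp add: fun_eq_iff power2_eq_square algebra_simps)
    have a1: "e (\<lambda>\<omega>. Y \<omega> * Y \<omega> + ((-2) * (g \<omega> * Y \<omega>) + g \<omega> * g \<omega>)) = e (\<lambda>\<omega>. Y \<omega> * Y \<omega>) + e (\<lambda>\<omega>. (-2) * (g \<omega> * Y \<omega>) + g \<omega> * g \<omega>)"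
      unfolding e_def by (rule e_add[OF iYY Bochner_Integration.integrable_add[OF icgY igg]])
    have a2: "e (\<lambda>\<omega>. (-2) * (g \<omega> * Y \<omega>) + g \<omega> * g \<omega>) = (-2) * e (\<lambda>\<omega>. g \<omega> * Y \<omega>) + e (\<lambda>\<omega>. g \<omega> * g \<omega>)"
      unfolding e_def by (simp only: e_add[OF icgY igg] e_mult)
    show ?thesis unfolding a0 a1 a2 by simp
  qed
  have L3: "e (\<lambda>\<omega>. (g \<omega> - \<nu>)\<^sup>2) = e (\<lambda>\<omega>. g \<omega> * g \<omega>) - \<nu>\<^sup>2"
  proof -
    have a0: "e (\<lambda>\<omega>. (g \<omega> - \<nu>)\<^sup>2) = e (\<lambda>\<omega>. g \<omega> * g \<omega> + ((-2*\<nu>) * g \<omega> + \<nu>\<^sup>2))"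
      by (rule arg_cong[where f=e]) (simp add: fun_eq_iff power2_eq_square algebra_simps)
    have a1: "e (\<lambda>\<omega>. g \<omega> * g \<omega> + ((-2*\<nu>) * g \<omega> + \<nu>\<^sup>2)) = e (\<lambda>\<omega>. g \<omega> * g \<omega>) + e (\<lambda>\<omega>. (-2*\<nu>) * g \<omega> + \<nu>\<^sup>2)"
      unfolding e_def by (rule e_add[OF igg Bochner_Integration.integrable_add[OF icg ic]])
    have a2: "e (\<lambda>\<omega>. (-2*\<nu>) * g \<omega> + \<nu>\<^sup>2) = (-2*\<nu>) * \<nu> + \<nu>\<^sup>2"
      unfolding e_def \<nu>_def by (simp only: e_add[OF icg ic] e_mult e_const)
    show ?thesis unfolding a0 a1 a2 by (simp add: power2_eq_square)
  qed
  have P3: "0 \<le> e (\<lambda>\<omega>. (g \<omega> - \<nu>)\<^sup>2)" unfolding e_def by (rule e_nonneg) simp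
  have "indistinguishable M X Y F \<alpha> (S k)"
    using assms(10) k unfolding multicalibrated_partition_def by blast
  then have "\<bar>cond_cov M A g Y\<bar> \<le> \<alpha>"
    using f unfolding indistinguishable_def A_def g_def by blast
  then have cov: "\<bar>e (\<lambda>\<omega>. g \<omega> * Y \<omega>) - \<nu> * \<mu>\<bar> \<le> \<alpha>"
    unfolding cond_cov_def e_def \<mu>_def \<nu>_def .
  have "e (\<lambda>\<omega>. (Y \<omega> - \<mu>)\<^sup>2) \<le> e (\<lambda>\<omega>. (Y \<omega> - g \<omega>)\<^sup>2) + 2 * \<alpha>"

  proof -
    have sq: "0 \<le> \<nu>\<^sup>2 - 2 * \<nu> * \<mu> + \<mu>\<^sup>2"
      using zero_le_power2[of "\<nu> - \<mu>"] by (simp add: power2_diff)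
    have "e (\<lambda>\<omega>. g \<omega> * Y \<omega>) \<le> \<nu> * \<mu> + \<alpha>" using cov by linarith
    then show ?thesis using L1 L2 L3 P3 sq by linarith
  qed
  then show "cond_exp_ev M (X -` S k \<inter> space M)
       (\<lambda>\<omega>. (Y \<omega> - cond_exp_ev M (X -` S k \<inter> space M) Y)\<^sup>2)
    \<le> cond_exp_ev M (X -` S k \<inter> space M) (\<lambda>\<omega>. (Y \<omega> - f (X \<omega>))\<^sup>2) + 2 * \<alpha>"
    unfolding e_def \<mu>_def A_def g_def .
qed

end
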